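(* Let $G$ be a group with the unique root property. Suppose that for infinitely many primes $p$ there exists a subgroup $H$ of index $p$ in $G$ which is isomorphic to $G$. Then the abstract commensurator $\mathrm{Comm}(G)$ is not finitely generated.
   Context: A group $G$ has the unique root property if for all $x,y\in G$ and every positive integer $n$, $x^n=y^n$ implies $x=y$. The abstract commensurator $\mathrm{Comm}(G)$ is the group of equivalence classes of isomorphisms between finite-index subgroups of $G$, two such isomorphisms being equivalent if they agree on some finite-index subgroup of $G$ on which both are defined; the product of $\alpha:G_1\to G_1'$ and $\beta:G_2\to G_2'$ is $\alpha\beta:\alpha^{-1}(G_1'\cap G_2)\to\beta(G_1'\cap G_2)$. *)

theory Defs
  imports "HOL-Algebra.Algebra" "HOL-Computational_Algebra.Primes"
begin

definition unique_root :: "('a, 'b) monoid_scheme \<Rightarrow> bool" where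
  "unique_root G \<longleftrightarrow> (\<forall>x\<in>carrier G. \<forall>y\<in>carrier G. \<forall>n::nat. n > 0 \<longrightarrow>
      x [^]\<^bsub>G\<^esub> n = y [^]\<^bsub>G\<^esub> n \<longrightarrow> x = y)"

definition fin_index :: "('a, 'b) monoid_scheme \<Rightarrow> 'a set \<Rightarrow> bool" where
  "fin_index G H \<longleftrightarrow> subgroup H G \<and> finite (rcosets\<^bsub>G\<^esub> H)"

definition partial_isos :: "('a, 'b) monoid_scheme \<Rightarrow> ('a set \<times> ('a \<Rightarrow> 'a)) set" where
  "partial_isos G = {(A, f). fin_index G A \<and> fin_index G (f ` A) \<and>
      f \<in> iso (G\<lparr>carrier := A\<rparr>) (G\<lparr>carrier := f ` A\<rparr>)}"

definition comm_equiv :: "('a, 'b) monoid_scheme \<Rightarrow>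
    ((('a set \<times> ('a \<Rightarrow> 'a))) \<times> ('a set \<times> ('a \<Rightarrow> 'a))) set" where
  "comm_equiv G = {(x, y). x \<in> partial_isos G \<and> y \<in> partial_isos G \<and>
      (\<exists>K. fin_index G K \<and> K \<subseteq> fst x \<and> K \<subseteq> fst y \<and> (\<forall>k\<in>K. snd x k = snd y k))}"

definition pcomp :: "('a set \<times> ('a \<Rightarrow> 'a)) \<Rightarrow> ('a set \<times> ('a \<Rightarrow> 'a)) \<Rightarrow> ('a set \<times> ('a \<Rightarrow> 'a))" where
  "pcomp x y = ({a \<in> fst x. snd x a \<in> fst y}, snd y \<circ> snd x)"

definition comm_mult :: "('a, 'b) monoid_scheme \<Rightarrow> ('a set \<times> ('a \<Rightarrow> 'a)) set \<Rightarrow>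
    ('a set \<times> ('a \<Rightarrow> 'a)) set \<Rightarrow> ('a set \<times> ('a \<Rightarrow> 'a)) set" where
  "comm_mult G U V = comm_equiv G `` {pcomp (SOME x. x \<in> U) (SOME y. y \<in> V)}"

definition Comm :: "('a, 'b) monoid_scheme \<Rightarrow> ('a set \<times> ('a \<Rightarrow> 'a)) set monoid" where
  "Comm G = \<lparr> carrier = partial_isos G // comm_equiv G,
              monoid.mult = comm_mult G,
              monoid.one = comm_equiv G `` {(carrier G, id)} \<rparr>"

definition finitely_generated :: "('a, 'b) monoid_scheme \<Rightarrow> bool" where
  "finitely_generated G \<longleftrightarrow> (\<exists>S. finite S \<and> S \<subseteq> carrier G \<and> generate G S = carrier G)"

end

theory Submission
  imports Defs
begin


lemma card_image_kernel:
  assumes "\<And>x y. x \<in> Sx \<Longrightarrow> y \<in> Sx \<Longrightarrow> ga x = ga y \<longleftrightarrow> Fa x = Fa y"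
  shows "bij_betw (\<lambda>z. Fa (inv_into Sx ga z)) (ga ` Sx) (Fa ` Sx)"
proof -
  have *: "Fa (inv_into Sx ga (ga x)) = Fa x" if "x \<in> Sx" for x
    using assms[of "inv_into Sx ga (ga x)" x] that
    by (simp add: inv_into_into f_inv_into_f)
  show ?thesis
    unfolding bij_betw_def
  proof
    show "inj_on (\<lambda>z. Fa (inv_into Sx ga z)) (ga ` Sx)"
      by (auto simp: inj_on_def * assms)
    show "(\<lambda>z. Fa (inv_into Sx ga z)) ` ga ` Sx = Fa ` Sx"
      by (force simp: image_image *)
  qed
qed

context group begin

lemma rcos_eq_iff:
  assumes "subgroup H G" "x \<in> carrier G" "y \<in> carrier G"
  shows "H #> x = H #> y \<longleftrightarrow> x \<otimes> inv y \<in> H"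
proof
  assume "H #> x = H #> y"
  then have "x \<in> H #> y" using rcos_self[OF assms(2,1)] by simp
  then show "x \<otimes> inv y \<in> H" using subgroup.rcos_module_imp[OF assms(1) is_group assms(3)] by blast
next
  assume "x \<otimes> inv y \<in> H"
  then have "x \<in> H #> y" using subgroup.rcos_module_rev[OF assms(1) is_group assms(3,2)] by blast
  then show "H #> x = H #> y" using repr_independence[OF _ assms(3,1)] by metis
qed

lemma rcosets_image: "rcosets H = (\<lambda>x. H #> x) ` carrier G"
  by (auto simp: RCOSETS_def)

lemma rcosets_sub_image: "rcosets\<^bsub>G\<lparr>carrier := A\<rparr>\<^esub> H = (\<lambda>x. H #> x) ` A"
  by (auto simp: RCOSETS_def r_coset_def)

lemma rcosets_kernel:
  assumes "subgroup H G"
    and "\<And>x y. x \<in> carrier G \<Longrightarrow> y \<in> carrier G \<Longrightarrow> x \<otimes> inv y \<in> H \<longleftrightarrow> F x = F y"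
  shows "card (rcosets H) = card (F ` carrier G)" "finite (rcosets H) \<longleftrightarrow> finite (F ` carrier G)"
proof -
  have "bij_betw (\<lambda>z. F (inv_into (carrier G) (\<lambda>x. H #> x) z)) ((\<lambda>x. H #> x) ` carrier G) (F ` carrier G)"
    by (rule card_image_kernel) (simp add: rcos_eq_iff assms)
  then show "card (rcosets H) = card (F ` carrier G)" "finite (rcosets H) \<longleftrightarrow> finite (F ` carrier G)"
    by (auto simp: rcosets_image bij_betw_same_card bij_betw_finite)
qed


lemma group_ident1:
  assumes "x \<in> carrier G" "y \<in> carrier G" "a \<in> carrier G"
  shows "(x \<otimes> inv a) \<otimes> inv (y \<otimes> inv a) = x \<otimes> inv y"
  using assms by (simp add: inv_mult_group m_assoc) (simp add: m_assoc [symmetric])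

lemma index_mult:
  assumes H: "subgroup H G" and K: "subgroup K G" and KH: "K \<subseteq> H"
  shows "card (rcosets K) = card (rcosets H) * card (rcosets\<^bsub>G\<lparr>carrier := H\<rparr>\<^esub> K)"
    "finite (rcosets K) \<longleftrightarrow> finite (rcosets H) \<and> finite (rcosets\<^bsub>G\<lparr>carrier := H\<rparr>\<^esub> K)"
proof -
  define r where "r C = (SOME a. a \<in> carrier G \<and> C = H #> a)" for C
  have r: "r (H #> x) \<in> carrier G \<and> H #> x = H #> r (H #> x)" if "x \<in> carrier G" for x
    unfolding r_def by (rule someI[of _ x]) (use that in auto)
  define F where "F x = (H #> x, K #> (x \<otimes> inv (r (H #> x))))" for x
  have Hc: "H \<subseteq> carrier G" using H subgroup.subset by blast
  have ker: "x \<otimes> inv y \<in> K \<longleftrightarrow> F x = F y" if xy: "x \<in> carrier G" "y \<in> carrier G" for x y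
  proof
    assume "x \<otimes> inv y \<in> K"
    then have eqH: "H #> x = H #> y" using KH rcos_eq_iff[OF H xy] by auto
    define a where "a = r (H #> x)"
    have a: "a \<in> carrier G" using r[OF xy(1)] a_def by auto
    have "K #> (x \<otimes> inv a) = K #> (y \<otimes> inv a)"
      using rcos_eq_iff[OF K, of "x \<otimes> inv a" "y \<otimes> inv a"] group_ident1[OF xy a] \<open>x \<otimes> inv y \<in> K\<close> a xy
      by simp
    then show "F x = F y" unfolding F_def using eqH a_def by simp
  next
    assume "F x = F y"
    then have eqH: "H #> x = H #> y" and eqK: "K #> (x \<otimes> inv (r (H #> x))) = K #> (y \<otimes> inv (r (H #> x)))"
      unfolding F_def by auto
    define a where "a = r (H #> x)"
    have a: "a \<in> carrier G" using r[OF xy(1)] a_def by auto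
    show "x \<otimes> inv y \<in> K"
      using rcos_eq_iff[OF K, of "x \<otimes> inv a" "y \<otimes> inv a"] group_ident1[OF xy a] eqK a xy a_def
      by simp
  qed
  have img: "F ` carrier G = (rcosets H) \<times> (rcosets\<^bsub>G\<lparr>carrier := H\<rparr>\<^esub> K)"
  proof
    show "F ` carrier G \<subseteq> (rcosets H) \<times> (rcosets\<^bsub>G\<lparr>carrier := H\<rparr>\<^esub> K)"
    proof
      fix z assume "z \<in> F ` carrier G"
      then obtain x where x: "x \<in> carrier G" "z = F x" by auto
      have "x \<otimes> inv (r (H #> x)) \<in> H" using r[OF x(1)] rcos_eq_iff[OF H x(1)] by auto
      then show "z \<in> (rcosets H) \<times> (rcosets\<^bsub>G\<lparr>carrier := H\<rparr>\<^esub> K)"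
        unfolding x F_def rcosets_sub_image using x(1) Hc by (auto simp: rcosets_image)
    qed
  next
    show "(rcosets H) \<times> (rcosets\<^bsub>G\<lparr>carrier := H\<rparr>\<^esub> K) \<subseteq> F ` carrier G"
    proof
      fix z assume "z \<in> (rcosets H) \<times> (rcosets\<^bsub>G\<lparr>carrier := H\<rparr>\<^esub> K)"
      then obtain x0 h where z: "x0 \<in> carrier G" "h \<in> H" "z = (H #> x0, K #> h)"
        unfolding rcosets_sub_image rcosets_image by auto
      define a where "a = r (H #> x0)"
      have a: "a \<in> carrier G" "H #> x0 = H #> a" using r[OF z(1)] a_def by auto
      have hc: "h \<in> carrier G" using z(2) Hc by auto
      have xc: "h \<otimes> a \<in> carrier G" using hc a by simp
      have "(h \<otimes> a) \<otimes> inv a = h" using hc a by (simp add: m_assoc)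
      then have "H #> (h \<otimes> a) = H #> a" using rcos_eq_iff[OF H xc a(1)] z(2) by simp
      then have e1: "H #> (h \<otimes> a) = H #> x0" using a(2) by simp
      then have e2: "r (H #> (h \<otimes> a)) = a" using a_def by simp
      have "F (h \<otimes> a) = z" unfolding F_def z(3) e2 unfolding e1 using \<open>(h \<otimes> a) \<otimes> inv a = h\<close> by simp
      then show "z \<in> F ` carrier G" using xc by blast
    qed
  qed
  have ne1: "rcosets H \<noteq> {}" using rcosets_image by auto
  have ne2: "rcosets\<^bsub>G\<lparr>carrier := H\<rparr>\<^esub> K \<noteq> {}" using rcosets_sub_image[of H K] subgroup.one_closed[OF H] by auto
  show "card (rcosets K) = card (rcosets H) * card (rcosets\<^bsub>G\<lparr>carrier := H\<rparr>\<^esub> K)"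
    using rcosets_kernel(1)[OF K ker] img by (simp add: card_cartesian_product)
  show "finite (rcosets K) \<longleftrightarrow> finite (rcosets H) \<and> finite (rcosets\<^bsub>G\<lparr>carrier := H\<rparr>\<^esub> K)"
    using rcosets_kernel(2)[OF K ker] img ne1 ne2 by (simp add: finite_cartesian_product_iff)
qed

lemma fin_index_Int:
  assumes "fin_index G A" "fin_index G B"
  shows "fin_index G (A \<inter> B)"
proof -
  have A: "subgroup A G" and B: "subgroup B G" and fA: "finite (rcosets A)" and fB: "finite (rcosets B)"
    using assms by (auto simp: fin_index_def)
  have AB: "subgroup (A \<inter> B) G" using A B by (rule subgroups_Inter_pair)
  define F where "F x = (A #> x, B #> x)" for x
  have ker: "x \<otimes> inv y \<in> A \<inter> B \<longleftrightarrow> F x = F y" if "x \<in> carrier G" "y \<in> carrier G" for x y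
    using rcos_eq_iff[OF A that] rcos_eq_iff[OF B that] by (auto simp: F_def)
  have "F ` carrier G \<subseteq> (rcosets A) \<times> (rcosets B)" by (auto simp: F_def rcosets_image)
  then have "finite (F ` carrier G)" using fA fB by (meson finite_SigmaI finite_subset)
  then show ?thesis using rcosets_kernel(2)[OF AB ker] AB by (simp add: fin_index_def)
qed

end



lemma iso_sub_iff:
  "f \<in> iso (G\<lparr>carrier := A\<rparr>) (G\<lparr>carrier := f ` A\<rparr>) \<longleftrightarrow>
     inj_on f A \<and> (\<forall>x\<in>A. \<forall>y\<in>A. f (x \<otimes>\<^bsub>G\<^esub> y) = f x \<otimes>\<^bsub>G\<^esub> f y)"
  by (auto simp: iso_def hom_def bij_betw_def)

context group begin

lemma pm_one:
  assumes A: "subgroup A G" and fA: "f ` A \<subseteq> carrier G"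
    and hom: "\<forall>x\<in>A. \<forall>y\<in>A. f (x \<otimes> y) = f x \<otimes> f y"
  shows "f \<one> = \<one>"
proof -
  have o: "\<one> \<in> A" by (rule subgroup.one_closed[OF A])
  have c: "f \<one> \<in> carrier G" using fA o by auto
  have "f \<one> \<otimes> f \<one> = f \<one>" using hom o by (metis l_one one_closed)
  then show ?thesis using c by simp
qed

lemma pm_inv:
  assumes A: "subgroup A G" and fA: "f ` A \<subseteq> carrier G"
    and hom: "\<forall>x\<in>A. \<forall>y\<in>A. f (x \<otimes> y) = f x \<otimes> f y" and a: "a \<in> A"
  shows "f (inv a) = inv (f a)"
proof -
  have ia: "inv a \<in> A" by (rule subgroup.m_inv_closed[OF A a])
  have ac: "a \<in> carrier G" by (rule subgroup.mem_carrier[OF A a])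
  have "f (inv a) \<otimes> f a = f (inv a \<otimes> a)" using hom ia a by simp
  also have "inv a \<otimes> a = \<one>" using ac by simp
  also have "f \<one> = \<one>" by (rule pm_one[OF A fA hom])
  finally have e: "f (inv a) \<otimes> f a = \<one>" .
  have c1: "f a \<in> carrier G" using fA a by auto
  have c2: "f (inv a) \<in> carrier G" using fA ia by auto
  show ?thesis using inv_equality[OF e c1 c2] by simp
qed

lemma pm_subgroup:
  assumes A: "subgroup A G" and fA: "f ` A \<subseteq> carrier G"
    and hom: "\<forall>x\<in>A. \<forall>y\<in>A. f (x \<otimes> y) = f x \<otimes> f y"
    and L: "subgroup L G" "L \<subseteq> A"
  shows "subgroup (f ` L) G"
proof (rule subgroupI)
  show "f ` L \<subseteq> carrier G" using fA L by auto
  show "f ` L \<noteq> {}" using subgroup.one_closed[OF L(1)] by auto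
  show "inv a \<in> f ` L" if "a \<in> f ` L" for a
  proof -
    from that obtain b where b: "b \<in> L" "a = f b" by blast
    have "inv a = f (inv b)" using pm_inv[OF A fA hom, of b] b L by auto
    then show ?thesis using b subgroup.m_inv_closed[OF L(1) b(1)] by simp
  qed
  show "a \<otimes> b \<in> f ` L" if "a \<in> f ` L" "b \<in> f ` L" for a b
  proof -
    from that obtain c where c: "c \<in> L" "a = f c" by blast
    from that obtain d where "d \<in> L" "b = f d" by blast
    moreover have "c \<in> A" "d \<in> A" using L(2) \<open>c \<in> L\<close> \<open>d \<in> L\<close> by auto
    moreover have "f c \<otimes> f d = f (c \<otimes> d)" using hom[rule_format, OF \<open>c \<in> A\<close> \<open>d \<in> A\<close>] by simp
    moreover have "c \<otimes> d \<in> L" using subgroup.m_closed[OF L(1) \<open>c \<in> L\<close> \<open>d \<in> L\<close>] .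
    ultimately show ?thesis using c by simp
  qed
qed

lemma pm_rcosets:
  assumes A: "subgroup A G" and inj: "inj_on f A"
    and hom: "\<forall>x\<in>A. \<forall>y\<in>A. f (x \<otimes> y) = f x \<otimes> f y"
    and L: "subgroup L G" "L \<subseteq> A"
  shows "card (rcosets\<^bsub>G\<lparr>carrier := f ` A\<rparr>\<^esub> (f ` L)) = card (rcosets\<^bsub>G\<lparr>carrier := A\<rparr>\<^esub> L)"
    "finite (rcosets\<^bsub>G\<lparr>carrier := f ` A\<rparr>\<^esub> (f ` L)) \<longleftrightarrow> finite (rcosets\<^bsub>G\<lparr>carrier := A\<rparr>\<^esub> L)"
proof -
  have rc: "M #> b = (\<lambda>h. h \<otimes> b) ` M" for M b unfolding r_coset_def by auto
  have im: "f ` (L #> a) = (f ` L) #> f a" if "a \<in> A" for a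
  proof -
    have "f ` (L #> a) = (\<lambda>h. f (h \<otimes> a)) ` L" unfolding rc image_image ..
    also have "\<dots> = (\<lambda>h. f h \<otimes> f a) ` L"
      by (rule image_cong) (use that L hom in auto)
    also have "\<dots> = (f ` L) #> f a" unfolding rc image_image ..
    finally show ?thesis .
  qed
  have sub: "L #> a \<subseteq> A" if "a \<in> A" for a
    unfolding rc using that L subgroup.m_closed[OF A] by auto
  have eq: "rcosets\<^bsub>G\<lparr>carrier := f ` A\<rparr>\<^esub> (f ` L) = image f ` (rcosets\<^bsub>G\<lparr>carrier := A\<rparr>\<^esub> L)"
    unfolding rcosets_sub_image image_image using im by auto
  have "inj_on (image f) (rcosets\<^bsub>G\<lparr>carrier := A\<rparr>\<^esub> L)"
    by (rule inj_on_subset[OF inj_on_image_Pow[OF inj]]) (use sub in \<open>auto simp: rcosets_sub_image\<close>)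
  then show "card (rcosets\<^bsub>G\<lparr>carrier := f ` A\<rparr>\<^esub> (f ` L)) = card (rcosets\<^bsub>G\<lparr>carrier := A\<rparr>\<^esub> L)"
    "finite (rcosets\<^bsub>G\<lparr>carrier := f ` A\<rparr>\<^esub> (f ` L)) \<longleftrightarrow> finite (rcosets\<^bsub>G\<lparr>carrier := A\<rparr>\<^esub> L)"
    unfolding eq by (simp_all add: card_image finite_image_iff)
qed

end



lemma PI_iff: "(A, f) \<in> partial_isos G \<longleftrightarrow> fin_index G A \<and> fin_index G (f ` A) \<and> inj_on f A \<and>
   (\<forall>x\<in>A. \<forall>y\<in>A. f (x \<otimes>\<^bsub>G\<^esub> y) = f x \<otimes>\<^bsub>G\<^esub> f y)"
  unfolding partial_isos_def using iso_sub_iff[where f=f and G=G and A=A] by auto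

lemma E_iff: "(x, y) \<in> comm_equiv G \<longleftrightarrow> x \<in> partial_isos G \<and> y \<in> partial_isos G \<and>
   (\<exists>K. fin_index G K \<and> K \<subseteq> fst x \<and> K \<subseteq> fst y \<and> (\<forall>k\<in>K. snd x k = snd y k))"
  unfolding comm_equiv_def by simp

context group begin

lemma fin_index_subgroup: "fin_index G A \<Longrightarrow> subgroup A G"
  by (simp add: fin_index_def)

lemma fin_index_carrier: "fin_index G A \<Longrightarrow> A \<subseteq> carrier G"
  by (simp add: fin_index_def subgroup.subset)

lemma index_self: "card (rcosets (carrier G)) = 1" "finite (rcosets (carrier G))"
proof -
  have k: "\<And>x y. x \<in> carrier G \<Longrightarrow> y \<in> carrier G \<Longrightarrow> x \<otimes> inv y \<in> carrier G \<longleftrightarrow> True = True"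
    by simp
  have i: "(\<lambda>x. True) ` carrier G = {True}" by auto
  note r = rcosets_kernel[of "carrier G" "\<lambda>x. True", OF subgroup_self]
  show "card (rcosets (carrier G)) = 1" using r(1) i k by simp
  show "finite (rcosets (carrier G))" using r(2) i k by simp
qed

lemma fin_index_self: "fin_index G (carrier G)"
  using index_self subgroup_self by (simp add: fin_index_def)

lemma IMG:
  assumes x: "(A, f) \<in> partial_isos G" and L: "fin_index G L" "L \<subseteq> A"
  shows "fin_index G (f ` L)"
proof -
  have A: "fin_index G A" and fA: "fin_index G (f ` A)" and inj: "inj_on f A"
    and hom: "\<forall>x\<in>A. \<forall>y\<in>A. f (x \<otimes> y) = f x \<otimes> f y" using x[unfolded PI_iff] by auto
  have As: "subgroup A G" using A fin_index_subgroup by auto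
  have Ls: "subgroup L G" using L fin_index_subgroup by auto
  have fAs: "subgroup (f ` A) G" using fA fin_index_subgroup by auto
  have fAc: "f ` A \<subseteq> carrier G" using fA fin_index_carrier by auto
  have fLs: "subgroup (f ` L) G" by (rule pm_subgroup[OF As fAc hom Ls L(2)])
  have "finite (rcosets\<^bsub>G\<lparr>carrier := A\<rparr>\<^esub> L)" using index_mult(2)[OF As Ls L(2)] L(1)
    by (simp add: fin_index_def)
  then have "finite (rcosets\<^bsub>G\<lparr>carrier := f ` A\<rparr>\<^esub> (f ` L))" using pm_rcosets(2)[OF As inj hom Ls L(2)] by simp
  then have "finite (rcosets (f ` L))" using index_mult(2)[OF fAs fLs image_mono[OF L(2)]] fA
    by (simp add: fin_index_def)
  then show ?thesis using fLs by (simp add: fin_index_def)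
qed

lemma INV:
  assumes x: "(A, f) \<in> partial_isos G"
  shows "(f ` A, inv_into A f) \<in> partial_isos G"
proof -
  have A: "fin_index G A" and fA: "fin_index G (f ` A)" and inj: "inj_on f A"
    and hom: "\<forall>x\<in>A. \<forall>y\<in>A. f (x \<otimes> y) = f x \<otimes> f y" using x[unfolded PI_iff] by auto
  have As: "subgroup A G" using A fin_index_subgroup by auto
  have im: "inv_into A f ` f ` A = A" using inv_into_image_cancel[OF inj] by simp
  have inj2: "inj_on (inv_into A f) (f ` A)" by (rule inj_on_inv_into) simp
  have hom2: "\<forall>u\<in>f ` A. \<forall>v\<in>f ` A. inv_into A f (u \<otimes> v) = inv_into A f u \<otimes> inv_into A f v"
  proof (intro ballI)
    fix u v assume "u \<in> f ` A" "v \<in> f ` A"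
    then obtain a b where ab: "a \<in> A" "b \<in> A" "u = f a" "v = f b" by auto
    have m: "a \<otimes> b \<in> A" using subgroup.m_closed[OF As ab(1,2)] .
    have "u \<otimes> v = f (a \<otimes> b)" using hom ab by simp
    then show "inv_into A f (u \<otimes> v) = inv_into A f u \<otimes> inv_into A f v"
      using inv_into_f_f[OF inj m] inv_into_f_f[OF inj ab(1)] inv_into_f_f[OF inj ab(2)] ab by simp
  qed
  show ?thesis unfolding PI_iff im using A fA inj2 hom2 by simp
qed

lemma PRE:
  assumes x: "(A, f) \<in> partial_isos G" and M: "fin_index G M"
  shows "fin_index G {a \<in> A. f a \<in> M}"
proof -
  have fA: "fin_index G (f ` A)" and inj: "inj_on f A" using x[unfolded PI_iff] by auto
  have eq: "{a \<in> A. f a \<in> M} = inv_into A f ` (f ` A \<inter> M)"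
  proof
    show "{a \<in> A. f a \<in> M} \<subseteq> inv_into A f ` (f ` A \<inter> M)"
    proof
      fix a assume "a \<in> {a \<in> A. f a \<in> M}"
      then have a: "a \<in> A" "f a \<in> M" by auto
      then have "a = inv_into A f (f a)" using inv_into_f_f[OF inj a(1)] by simp
      then show "a \<in> inv_into A f ` (f ` A \<inter> M)" using a by blast
    qed
    show "inv_into A f ` (f ` A \<inter> M) \<subseteq> {a \<in> A. f a \<in> M}"
      using inv_into_f_f[OF inj] by auto
  qed
  show ?thesis unfolding eq
    by (rule IMG[OF INV[OF x] fin_index_Int[OF fA M]]) auto
qed

lemma RESTR:
  assumes x: "(A, f) \<in> partial_isos G" and L: "fin_index G L" "L \<subseteq> A"
  shows "(L, f) \<in> partial_isos G"
proof -
  have inj: "inj_on f A"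
    and hom: "\<forall>x\<in>A. \<forall>y\<in>A. f (x \<otimes> y) = f x \<otimes> f y" using x[unfolded PI_iff] by auto
  show ?thesis unfolding PI_iff using L IMG[OF x L] inj_on_subset[OF inj L(2)] hom by blast
qed

lemma PCOMP:
  assumes x: "x \<in> partial_isos G" and y: "y \<in> partial_isos G"
  shows "pcomp x y \<in> partial_isos G"
proof -
  obtain A f B g where xy: "x = (A, f)" "y = (B, g)" by fastforce
  have x': "(A, f) \<in> partial_isos G" and y': "(B, g) \<in> partial_isos G" using x y xy by auto
  have B: "fin_index G B" and injf: "inj_on f A" and injg: "inj_on g B"
    and homf: "\<forall>x\<in>A. \<forall>y\<in>A. f (x \<otimes> y) = f x \<otimes> f y"
    and homg: "\<forall>x\<in>B. \<forall>y\<in>B. g (x \<otimes> y) = g x \<otimes> g y" using x'[unfolded PI_iff] y'[unfolded PI_iff] by auto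
  define D where "D = {a \<in> A. f a \<in> B}"
  have D: "fin_index G D" unfolding D_def by (rule PRE[OF x' B])
  have fD: "fin_index G (f ` D)" by (rule IMG[OF x' D]) (auto simp: D_def)
  have gfD: "fin_index G (g ` f ` D)" by (rule IMG[OF y' fD]) (auto simp: D_def)
  have inj: "inj_on (g \<circ> f) D"
    by (rule comp_inj_on) (auto simp: D_def intro: inj_on_subset[OF injf] inj_on_subset[OF injg])
  have hom: "\<forall>a\<in>D. \<forall>b\<in>D. (g \<circ> f) (a \<otimes> b) = (g \<circ> f) a \<otimes> (g \<circ> f) b"
  proof (intro ballI)
    fix a b assume "a \<in> D" "b \<in> D"
    then have ab: "a \<in> A" "b \<in> A" "f a \<in> B" "f b \<in> B" by (auto simp: D_def)
    show "(g \<circ> f) (a \<otimes> b) = (g \<circ> f) a \<otimes> (g \<circ> f) b"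
      using homf[rule_format, OF ab(1,2)] homg[rule_format, OF ab(3,4)] by simp
  qed
  have e: "pcomp x y = (D, g \<circ> f)" unfolding pcomp_def xy D_def by simp
  have "(D, g \<circ> f) \<in> partial_isos G" unfolding PI_iff using D gfD inj hom by (simp add: image_comp)
  then show ?thesis using e by simp
qed

end



context group begin

lemma EQV: "equiv (partial_isos G) (comm_equiv G)"
proof (rule equivI)
  show "comm_equiv G \<subseteq> partial_isos G \<times> partial_isos G" by (auto simp: comm_equiv_def)
  show "refl_on (partial_isos G) (comm_equiv G)"
  proof (rule refl_onI)
    fix x assume x: "x \<in> partial_isos G"
    obtain A f where xe: "x = (A, f)" by (cases x)
    have "fin_index G A" using x[unfolded xe PI_iff] by auto
    then show "(x, x) \<in> comm_equiv G" unfolding E_iff using x xe by auto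
  qed
  show "sym (comm_equiv G)"
    by (rule symI) (auto simp: E_iff)
  show "trans (comm_equiv G)"
  proof (rule transI)
    fix x y z assume "(x, y) \<in> comm_equiv G" "(y, z) \<in> comm_equiv G"
    then obtain K1 K2 where K: "x \<in> partial_isos G" "z \<in> partial_isos G"
      "fin_index G K1" "K1 \<subseteq> fst x" "K1 \<subseteq> fst y" "\<forall>k\<in>K1. snd x k = snd y k"
      "fin_index G K2" "K2 \<subseteq> fst y" "K2 \<subseteq> fst z" "\<forall>k\<in>K2. snd y k = snd z k"
      unfolding E_iff by blast
    show "(x, z) \<in> comm_equiv G" unfolding E_iff
      using K fin_index_Int[OF K(3) K(7)] by (intro conjI exI[of _ "K1 \<inter> K2"]) auto
  qed
qed

lemma PCOMP_RESP:
  assumes xx: "(x, x') \<in> comm_equiv G" and yy: "(y, y') \<in> comm_equiv G"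
  shows "(pcomp x y, pcomp x' y') \<in> comm_equiv G"
proof -
  obtain A f where xe: "x = (A, f)" by (cases x)
  obtain A' f' where xe': "x' = (A', f')" by (cases x')
  obtain B g where ye: "y = (B, g)" by (cases y)
  obtain B' g' where ye': "y' = (B', g')" by (cases y')
  from xx obtain K1 where K1: "(A, f) \<in> partial_isos G" "(A', f') \<in> partial_isos G"
    "fin_index G K1" "K1 \<subseteq> A" "K1 \<subseteq> A'" "\<forall>k\<in>K1. f k = f' k"
    unfolding E_iff xe xe' by auto
  from yy obtain K2 where K2: "(B, g) \<in> partial_isos G" "(B', g') \<in> partial_isos G"
    "fin_index G K2" "K2 \<subseteq> B" "K2 \<subseteq> B'" "\<forall>k\<in>K2. g k = g' k"
    unfolding E_iff ye ye' by auto
  define K where "K = K1 \<inter> {a \<in> A. f a \<in> K2}"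
  have K: "fin_index G K" unfolding K_def by (rule fin_index_Int[OF K1(3) PRE[OF K1(1) K2(3)]])
  have p1: "pcomp x y \<in> partial_isos G" using PCOMP K1(1) K2(1) xe ye by simp
  have p2: "pcomp x' y' \<in> partial_isos G" using PCOMP K1(2) K2(2) xe' ye' by simp
  have s1: "K \<subseteq> fst (pcomp x y)" using K1 K2 unfolding K_def pcomp_def xe ye by auto
  have s2: "K \<subseteq> fst (pcomp x' y')" using K1 K2 unfolding K_def pcomp_def xe' ye' by auto
  have v: "\<forall>k\<in>K. snd (pcomp x y) k = snd (pcomp x' y') k"
    using K1 K2 unfolding K_def pcomp_def xe ye xe' ye' by auto
  show ?thesis unfolding E_iff using p1 p2 K s1 s2 v by blast
qed

lemma PCOMP_ASSOC: "pcomp (pcomp x y) z = pcomp x (pcomp y z)"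
  unfolding pcomp_def by auto

lemma ID_PI: "(carrier G, id) \<in> partial_isos G"
  unfolding PI_iff using fin_index_self by simp

lemma PCOMP_ID: "x \<in> partial_isos G \<Longrightarrow> pcomp (carrier G, id) x = x"
  unfolding pcomp_def using fin_index_carrier
  by (cases x) (auto simp: PI_iff)

lemma PCOMP_INV:
  assumes x: "(A, f) \<in> partial_isos G"
  shows "(pcomp (f ` A, inv_into A f) (A, f), (carrier G, id)) \<in> comm_equiv G"
proof -
  have fA: "fin_index G (f ` A)" using x[unfolded PI_iff] by auto
  have p: "pcomp (f ` A, inv_into A f) (A, f) \<in> partial_isos G" by (rule PCOMP[OF INV[OF x] x])
  have s: "f ` A \<subseteq> fst (pcomp (f ` A, inv_into A f) (A, f))"
    unfolding pcomp_def by (auto intro: inv_into_into)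
  have v: "\<forall>k\<in>f ` A. snd (pcomp (f ` A, inv_into A f) (A, f)) k = snd (carrier G, id) k"
    unfolding pcomp_def by (auto simp: f_inv_into_f)
  show ?thesis unfolding E_iff using p ID_PI fA s v fin_index_carrier[OF fA] by auto
qed

end



lemma Comm_simps:
  "carrier (Comm G) = partial_isos G // comm_equiv G"
  "x \<otimes>\<^bsub>Comm G\<^esub> y = comm_mult G x y"
  "\<one>\<^bsub>Comm G\<^esub> = comm_equiv G `` {(carrier G, id)}"
  by (simp_all add: Comm_def)

context group begin

lemma cls_mem: "x \<in> partial_isos G \<Longrightarrow> x \<in> comm_equiv G `` {x}"
  using equiv_class_self[OF EQV] .

lemma cls_eq: "(x, y) \<in> comm_equiv G \<Longrightarrow> comm_equiv G `` {x} = comm_equiv G `` {y}"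
  using equiv_class_eq[OF EQV] .

lemma mem_cls:
  assumes U: "U \<in> partial_isos G // comm_equiv G" and u: "u \<in> U"
  shows "U = comm_equiv G `` {u}" "u \<in> partial_isos G"
proof -
  obtain x where x: "U = comm_equiv G `` {x}" "x \<in> partial_isos G" using U by (rule quotientE)
  have xu: "(x, u) \<in> comm_equiv G" using u x by simp
  then show "U = comm_equiv G `` {u}" using x cls_eq by simp
  show "u \<in> partial_isos G" using xu by (simp add: E_iff)
qed

lemma rep_mem:
  assumes U: "U \<in> partial_isos G // comm_equiv G"
  shows "(SOME u. u \<in> U) \<in> U"
proof -
  obtain x where x: "U = comm_equiv G `` {x}" "x \<in> partial_isos G" using U by (rule quotientE)
  then have "x \<in> U" using cls_mem by simp
  then show ?thesis by (rule someI)
qed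

lemma MULT:
  assumes U: "U \<in> partial_isos G // comm_equiv G" and V: "V \<in> partial_isos G // comm_equiv G"
    and u: "u \<in> U" and v: "v \<in> V"
  shows "comm_mult G U V = comm_equiv G `` {pcomp u v}"
proof -
  define u0 where "u0 = (SOME u. u \<in> U)"
  define v0 where "v0 = (SOME u. u \<in> V)"
  have u0: "u0 \<in> U" using rep_mem[OF U] u0_def by simp
  have v0: "v0 \<in> V" using rep_mem[OF V] v0_def by simp
  have "u \<in> comm_equiv G `` {u0}" using mem_cls(1)[OF U u0] u by simp
  then have uu: "(u0, u) \<in> comm_equiv G" by simp
  have "v \<in> comm_equiv G `` {v0}" using mem_cls(1)[OF V v0] v by simp
  then have vv: "(v0, v) \<in> comm_equiv G" by simp
  have "comm_mult G U V = comm_equiv G `` {pcomp u0 v0}" unfolding comm_mult_def u0_def v0_def ..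
  also have "\<dots> = comm_equiv G `` {pcomp u v}" by (rule cls_eq[OF PCOMP_RESP[OF uu vv]])
  finally show ?thesis .
qed

lemma Comm_group: "group (Comm G)"
proof (rule groupI, unfold Comm_simps)
  fix U V assume U: "U \<in> partial_isos G // comm_equiv G" and V: "V \<in> partial_isos G // comm_equiv G"
  obtain u v where uv: "u \<in> U" "v \<in> V" using rep_mem[OF U] rep_mem[OF V] by blast
  have "pcomp u v \<in> partial_isos G" using PCOMP mem_cls(2)[OF U uv(1)] mem_cls(2)[OF V uv(2)] by blast
  then show "comm_mult G U V \<in> partial_isos G // comm_equiv G"
    unfolding MULT[OF U V uv] by (rule quotientI)
next
  show "comm_equiv G `` {(carrier G, id)} \<in> partial_isos G // comm_equiv G"
    using ID_PI by (rule quotientI)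
next
  fix U V W assume U: "U \<in> partial_isos G // comm_equiv G" and V: "V \<in> partial_isos G // comm_equiv G"
    and W: "W \<in> partial_isos G // comm_equiv G"
  obtain u v w where uvw: "u \<in> U" "v \<in> V" "w \<in> W" using rep_mem[OF U] rep_mem[OF V] rep_mem[OF W] by blast
  have pu: "u \<in> partial_isos G" "v \<in> partial_isos G" "w \<in> partial_isos G"
    using mem_cls(2) U V W uvw by blast+
  have puv: "pcomp u v \<in> partial_isos G" "pcomp v w \<in> partial_isos G" using PCOMP pu by blast+
  have UV: "comm_mult G U V \<in> partial_isos G // comm_equiv G" "comm_mult G V W \<in> partial_isos G // comm_equiv G"
    unfolding MULT[OF U V uvw(1,2)] MULT[OF V W uvw(2,3)] using puv by (auto intro: quotientI)
  have m1: "pcomp u v \<in> comm_mult G U V" unfolding MULT[OF U V uvw(1,2)] using cls_mem puv by blast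
  have m2: "pcomp v w \<in> comm_mult G V W" unfolding MULT[OF V W uvw(2,3)] using cls_mem puv by blast
  show "comm_mult G (comm_mult G U V) W = comm_mult G U (comm_mult G V W)"
    unfolding MULT[OF UV(1) W m1 uvw(3)] MULT[OF U UV(2) uvw(1) m2] PCOMP_ASSOC ..
next
  fix U assume U: "U \<in> partial_isos G // comm_equiv G"
  obtain u where u: "u \<in> U" using rep_mem[OF U] by blast
  have I: "comm_equiv G `` {(carrier G, id)} \<in> partial_isos G // comm_equiv G"
    using ID_PI by (rule quotientI)
  show "comm_mult G (comm_equiv G `` {(carrier G, id)}) U = U"
    unfolding MULT[OF I U cls_mem[OF ID_PI] u] PCOMP_ID[OF mem_cls(2)[OF U u]]
    using mem_cls(1)[OF U u] by simp
next
  fix U assume U: "U \<in> partial_isos G // comm_equiv G"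
  obtain u where u: "u \<in> U" using rep_mem[OF U] by blast
  obtain A f where ue: "u = (A, f)" by (cases u)
  have pu: "(A, f) \<in> partial_isos G" using mem_cls(2)[OF U u] ue by simp
  define Y where "Y = comm_equiv G `` {(f ` A, inv_into A f)}"
  have Y: "Y \<in> partial_isos G // comm_equiv G" unfolding Y_def using INV[OF pu] by (rule quotientI)
  have "comm_mult G Y U = comm_equiv G `` {(carrier G, id)}"
    unfolding MULT[OF Y U cls_mem[OF INV[OF pu], folded Y_def] u] ue
    by (rule cls_eq[OF PCOMP_INV[OF pu]])
  then show "\<exists>Y\<in>partial_isos G // comm_equiv G. comm_mult G Y U = comm_equiv G `` {(carrier G, id)}"
    using Y by blast
qed

end



definition vq :: "('a, 'b) monoid_scheme \<Rightarrow> nat \<Rightarrow> ('a set \<times> ('a \<Rightarrow> 'a)) \<Rightarrow> int" where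
  "vq G p x = int (multiplicity p (card (rcosets\<^bsub>G\<^esub> (fst x)))) -
              int (multiplicity p (card (rcosets\<^bsub>G\<^esub> (snd x ` fst x))))"

definition vc :: "('a, 'b) monoid_scheme \<Rightarrow> nat \<Rightarrow> ('a set \<times> ('a \<Rightarrow> 'a)) set \<Rightarrow> int" where
  "vc G p U = vq G p (SOME u. u \<in> U)"

context group begin

lemma card_pos: "fin_index G A \<Longrightarrow> card (rcosets A) > 0"
  unfolding fin_index_def using rcosets_image[of A] by (auto simp: card_gt_0_iff)

lemma V_RESTR:
  assumes p: "Factorial_Ring.prime p" and x: "(A, f) \<in> partial_isos G" and L: "fin_index G L" "L \<subseteq> A"
  shows "vq G p (L, f) = vq G p (A, f)"
proof -
  have A: "fin_index G A" and fA: "fin_index G (f ` A)" and inj: "inj_on f A"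
    and hom: "\<forall>x\<in>A. \<forall>y\<in>A. f (x \<otimes> y) = f x \<otimes> f y" using x[unfolded PI_iff] by auto
  have fL: "fin_index G (f ` L)" by (rule IMG[OF x L])
  have As: "subgroup A G" and Ls: "subgroup L G" and fAs: "subgroup (f ` A) G" and fLs: "subgroup (f ` L) G"
    using A L fA fL fin_index_subgroup by auto
  define r where "r = card (rcosets\<^bsub>G\<lparr>carrier := A\<rparr>\<^esub> L)"
  have e1: "card (rcosets L) = card (rcosets A) * r" unfolding r_def by (rule index_mult(1)[OF As Ls L(2)])
  have e2: "card (rcosets (f ` L)) = card (rcosets (f ` A)) * r"
    unfolding r_def index_mult(1)[OF fAs fLs image_mono[OF L(2)]] pm_rcosets(1)[OF As inj hom Ls L(2)] ..
  have c1: "card (rcosets L) > 0" using card_pos[OF L(1)] .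
  have c2: "card (rcosets A) > 0" using card_pos[OF A] .
  have c3: "card (rcosets (f ` A)) > 0" using card_pos[OF fA] .
  have r0: "r \<noteq> 0" using c1 e1 by auto
  have pe: "prime_elem p" using p by auto
  show ?thesis unfolding vq_def fst_conv snd_conv e1 e2
    using prime_elem_multiplicity_mult_distrib[OF pe, of "card (rcosets A)" r]
      prime_elem_multiplicity_mult_distrib[OF pe, of "card (rcosets (f ` A))" r] c2 c3 r0
    by simp
qed

lemma V_EQ:
  assumes p: "Factorial_Ring.prime p" and xy: "(x, y) \<in> comm_equiv G"
  shows "vq G p x = vq G p y"
proof -
  obtain A f where xe: "x = (A, f)" by (cases x)
  obtain B g where ye: "y = (B, g)" by (cases y)
  from xy obtain K where K: "(A, f) \<in> partial_isos G" "(B, g) \<in> partial_isos G"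
    "fin_index G K" "K \<subseteq> A" "K \<subseteq> B" "\<forall>k\<in>K. f k = g k"
    unfolding E_iff xe ye by auto
  have "f ` K = g ` K" by (rule image_cong) (use K(6) in auto)
  then have "vq G p (K, f) = vq G p (K, g)" by (simp add: vq_def)
  then show ?thesis using V_RESTR[OF p K(1) K(3,4)] V_RESTR[OF p K(2) K(3,5)] xe ye by simp
qed

lemma V_MULT:
  assumes p: "Factorial_Ring.prime p" and x: "x \<in> partial_isos G" and y: "y \<in> partial_isos G"
  shows "vq G p (pcomp x y) = vq G p x + vq G p y"
proof -
  obtain A f where xe: "x = (A, f)" by (cases x)
  obtain B g where ye: "y = (B, g)" by (cases y)
  have x': "(A, f) \<in> partial_isos G" and y': "(B, g) \<in> partial_isos G" using x y xe ye by auto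
  have B: "fin_index G B" using y'[unfolded PI_iff] by auto
  define D where "D = {a \<in> A. f a \<in> B}"
  have D: "fin_index G D" unfolding D_def by (rule PRE[OF x' B])
  have fD: "fin_index G (f ` D)" by (rule IMG[OF x' D]) (auto simp: D_def)
  have v1: "vq G p (D, f) = vq G p (A, f)" by (rule V_RESTR[OF p x' D]) (auto simp: D_def)
  have v2: "vq G p (f ` D, g) = vq G p (B, g)" by (rule V_RESTR[OF p y' fD]) (auto simp: D_def)
  have e: "pcomp x y = (D, g \<circ> f)" unfolding pcomp_def xe ye D_def by simp
  have "vq G p (D, g \<circ> f) = vq G p (A, f) + vq G p (B, g)" using v1 v2 by (simp add: vq_def image_comp)
  then show ?thesis using e xe ye by simp
qed

lemma vc_mem:
  assumes p: "Factorial_Ring.prime p" and U: "U \<in> partial_isos G // comm_equiv G" and u: "u \<in> U"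
  shows "vc G p U = vq G p u"
proof -
  have r: "(SOME u. u \<in> U) \<in> U" by (rule rep_mem[OF U])
  have "u \<in> comm_equiv G `` {SOME u. u \<in> U}" using mem_cls(1)[OF U r] u by simp
  then show ?thesis unfolding vc_def using V_EQ[OF p] by simp
qed

lemma vc_mult:
  assumes p: "Factorial_Ring.prime p" and U: "U \<in> partial_isos G // comm_equiv G" and V: "V \<in> partial_isos G // comm_equiv G"
  shows "vc G p (comm_mult G U V) = vc G p U + vc G p V"
proof -
  obtain u v where uv: "u \<in> U" "v \<in> V" using rep_mem[OF U] rep_mem[OF V] by blast
  have pu: "u \<in> partial_isos G" "v \<in> partial_isos G" using mem_cls(2) U V uv by blast+
  have pc: "pcomp u v \<in> partial_isos G" using PCOMP pu by blast
  have "vc G p (comm_mult G U V) = vq G p (pcomp u v)"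
    unfolding MULT[OF U V uv] by (rule vc_mem[OF p quotientI[OF pc] cls_mem[OF pc]])
  also have "\<dots> = vq G p u + vq G p v" by (rule V_MULT[OF p pu])
  finally show ?thesis using vc_mem[OF p U uv(1)] vc_mem[OF p V uv(2)] by simp
qed

lemma vc_one: "Factorial_Ring.prime p \<Longrightarrow> vc G p (comm_equiv G `` {(carrier G, id)}) = 0"
  using vc_mem[OF _ quotientI[OF ID_PI] cls_mem[OF ID_PI]] by (simp add: vq_def)

lemma vc_inv:
  assumes p: "Factorial_Ring.prime p" and U: "U \<in> carrier (Comm G)"
  shows "vc G p (inv\<^bsub>Comm G\<^esub> U) = - vc G p U"
proof -
  interpret C: group "Comm G" by (rule Comm_group)
  have iU: "inv\<^bsub>Comm G\<^esub> U \<in> carrier (Comm G)" using U by simp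
  have "inv\<^bsub>Comm G\<^esub> U \<otimes>\<^bsub>Comm G\<^esub> U = \<one>\<^bsub>Comm G\<^esub>" using U by simp
  then have "comm_mult G (inv\<^bsub>Comm G\<^esub> U) U = comm_equiv G `` {(carrier G, id)}" by (simp add: Comm_simps)
  then have "vc G p (inv\<^bsub>Comm G\<^esub> U) + vc G p U = 0"
    using vc_mult[OF p, of "inv\<^bsub>Comm G\<^esub> U" U] iU U vc_one[OF p] by (simp add: Comm_simps)
  then show ?thesis by simp
qed

end



theorem proposition2p8:
  fixes G :: "('a, 'b) monoid_scheme"
  assumes "group G"
    and "unique_root G"
    and "infinite {p::nat. Factorial_Ring.prime p \<and> (\<exists>H. subgroup H G \<and> card (rcosets\<^bsub>G\<^esub> H) = p \<and>
                     G\<lparr>carrier := H\<rparr> \<cong> G)}"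
  shows "\<not> finitely_generated (Comm G)"
proof
  interpret group G by fact
  interpret C: group "Comm G" by (rule Comm_group)
  assume "finitely_generated (Comm G)"
  then obtain S where S: "finite S" "S \<subseteq> carrier (Comm G)" "generate (Comm G) S = carrier (Comm G)"
    unfolding finitely_generated_def by blast
  define rp where "rp s = (SOME u. u \<in> s)" for s :: "('a set \<times> ('a \<Rightarrow> 'a)) set"
  define N where "N = (\<Union>s\<in>S. prime_factors (card (rcosets\<^bsub>G\<^esub> (fst (rp s))) * card (rcosets\<^bsub>G\<^esub> (snd (rp s) ` fst (rp s)))))"
  have fN: "finite N" unfolding N_def using S(1) by simp
  define PS where "PS = {p::nat. Factorial_Ring.prime p \<and> (\<exists>H. subgroup H G \<and> card (rcosets\<^bsub>G\<^esub> H) = p \<and>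
                     G\<lparr>carrier := H\<rparr> \<cong> G)}"
  have "infinite (PS - N)" using Diff_infinite_finite[OF fN] assms(3) unfolding PS_def by blast
  then obtain p where "p \<in> PS - N" by (meson finite.emptyI finite_subset subsetI)
  then obtain H where p: "Factorial_Ring.prime p" "p \<notin> N" and H: "subgroup H G" "card (rcosets\<^bsub>G\<^esub> H) = p"
    "G\<lparr>carrier := H\<rparr> \<cong> G" unfolding PS_def by blast
  have A: "vc G p s = 0" if s: "s \<in> S" for s
  proof -
    have sQ: "s \<in> partial_isos G // comm_equiv G" using s S(2) by (auto simp: Comm_simps)
    have r: "rp s \<in> s" unfolding rp_def by (rule rep_mem[OF sQ])
    obtain A f where rf: "rp s = (A, f)" by (cases "rp s")
    have pr: "(A, f) \<in> partial_isos G" using mem_cls(2)[OF sQ r] rf by simp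
    have c1: "card (rcosets\<^bsub>G\<^esub> A) > 0" "card (rcosets\<^bsub>G\<^esub> (f ` A)) > 0"
      using card_pos pr[unfolded PI_iff] by auto
    have "p \<notin> prime_factors (card (rcosets\<^bsub>G\<^esub> A) * card (rcosets\<^bsub>G\<^esub> (f ` A)))"
      using p(2) s rf unfolding N_def by force
    then have "\<not> p dvd (card (rcosets\<^bsub>G\<^esub> A) * card (rcosets\<^bsub>G\<^esub> (f ` A)))"
      using c1 p(1) by (auto simp: in_prime_factors_iff)
    then have "\<not> p dvd card (rcosets\<^bsub>G\<^esub> A)" "\<not> p dvd card (rcosets\<^bsub>G\<^esub> (f ` A))"
      by (auto intro: dvd_mult2 dvd_mult)
    then have "vq G p (A, f) = 0" by (simp add: vq_def not_dvd_imp_multiplicity_0)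
    then show ?thesis using vc_mem[OF p(1) sQ r] rf by simp
  qed
  have B: "vc G p U = 0" if "U \<in> generate (Comm G) S" for U
    using that
  proof (induction rule: generate.induct)
    case one
    then show ?case using vc_one[OF p(1)] by (simp add: Comm_simps)
  next
    case (incl h)
    then show ?case using A by blast
  next
    case (inv h)
    then show ?case using A vc_inv[OF p(1)] S(2) by auto
  next
    case (eng h1 h2)
    have "h1 \<in> carrier (Comm G)" "h2 \<in> carrier (Comm G)"
      using eng.hyps C.generate_in_carrier[OF S(2)] by auto
    then show ?case using vc_mult[OF p(1)] eng.IH by (simp add: Comm_simps)
  qed
  obtain phi where phi: "phi \<in> iso (G\<lparr>carrier := H\<rparr>) G" using H(3) unfolding is_iso_def by blast
  have bij: "bij_betw phi H (carrier G)" using phi by (simp add: iso_def)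
  have im: "phi ` H = carrier G" using bij by (simp add: bij_betw_def)
  have inj: "inj_on phi H" using bij by (simp add: bij_betw_def)
  have hom: "\<forall>x\<in>H. \<forall>y\<in>H. phi (x \<otimes>\<^bsub>G\<^esub> y) = phi x \<otimes>\<^bsub>G\<^esub> phi y"
    using phi by (simp add: iso_def hom_def)
  have finH: "fin_index G H" using H(1,2) p(1) card_ge_0_finite[of "rcosets\<^bsub>G\<^esub> H"]
    by (simp add: fin_index_def prime_gt_0_nat)
  have w: "(H, phi) \<in> partial_isos G" unfolding PI_iff im using finH fin_index_self inj hom by simp
  define W where "W = comm_equiv G `` {(H, phi)}"
  have WQ: "W \<in> partial_isos G // comm_equiv G" unfolding W_def using w by (rule quotientI)
  have "vc G p W = vq G p (H, phi)" unfolding W_def by (rule vc_mem[OF p(1) quotientI[OF w] cls_mem[OF w]])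
  also have "\<dots> = 1" using H(2) im index_self(1) p(1) by (simp add: vq_def)
  finally have "vc G p W = 1" .
  moreover have "W \<in> generate (Comm G) S" using S(3) WQ by (simp add: Comm_simps)
  ultimately show False using B by simp
qed


end
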